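(* There exists a positive integer $d_0$ such that the following holds for all $d \geq d_0$. Let $n$ be a positive even integer, and let $H = (X \cup Y, E)$ be a balanced bipartite graph on $[n]$ with parts $X,Y$ satisfying $\frac{d}{2}-d^{2/3}\leq\deg_H(v) \leq \frac{d}{2} + d^{2/3}$ for every $v \in [n]$. Let $G_X$ be a graph on $X$ with maximum degree at most $\Delta$, where $1 \leq \Delta \leq d$. Then there exist $k := \lceil \log_2 \Delta \rceil + 8$ bipartitions $\{X'_1, X''_1\}, \ldots, \{X'_k, X''_k\}$ of $X$ such that: (M1) for every edge $e \in E(G_X)$ there is at least one index $j \in [k]$ such that $e$ has one endpoint in $X'_j$ and the other in $X''_j$; (M2) for each $1 \leq j \leq k$, $\{X'_j, X''_j\}$ is $\frac{d}{5}$-good with respect to $H$.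
   Context: A balanced bipartite graph $H=(X\cup Y,E)$ is a bipartite graph with parts $X,Y$, $|X|=|Y|$. Definition ($d$-good bipartition): let $H=(X\cup Y,E)$ be a balanced bipartite graph on $[n]$ and $d>0$. A bipartition $\{X',X''\}$ of $X$ is $d$-good with respect to $H$ if (G1) $\big||X'|-|X''|\big|\leq 1$, and (G2) $|N_H(y)\cap X'|\geq d$ and $|N_H(y)\cap X''|\geq d$ for every $y\in Y$. *)

theory Defs
  imports Complex_Main
begin

definition nbhd :: "(nat \<Rightarrow> nat \<Rightarrow> bool) \<Rightarrow> nat \<Rightarrow> nat set" where
  "nbhd E v = {u. E v u}"

definition simple_graph_on :: "nat set \<Rightarrow> (nat \<Rightarrow> nat \<Rightarrow> bool) \<Rightarrow> bool" where
  "simple_graph_on V E \<longleftrightarrow>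
     (\<forall>u v. E u v \<longrightarrow> E v u) \<and> (\<forall>u. \<not> E u u) \<and>
     (\<forall>u v. E u v \<longrightarrow> u \<in> V \<and> v \<in> V)"

definition balanced_bipartite :: "nat \<Rightarrow> nat set \<Rightarrow> nat set \<Rightarrow> (nat \<Rightarrow> nat \<Rightarrow> bool) \<Rightarrow> bool" where
  "balanced_bipartite n X Y E \<longleftrightarrow>
     simple_graph_on {1..n} E \<and> X \<union> Y = {1..n} \<and> X \<inter> Y = {} \<and> card X = card Y \<and>
     (\<forall>u v. E u v \<longrightarrow> (u \<in> X \<and> v \<in> Y) \<or> (u \<in> Y \<and> v \<in> X))"

definition bipartition_of :: "nat set \<Rightarrow> nat set \<Rightarrow> nat set \<Rightarrow> bool" where
  "bipartition_of X X1 X2 \<longleftrightarrow> X1 \<union> X2 = X \<and> X1 \<inter> X2 = {}"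

definition d_good :: "real \<Rightarrow> nat set \<Rightarrow> (nat \<Rightarrow> nat \<Rightarrow> bool) \<Rightarrow> nat set \<Rightarrow> nat set \<Rightarrow> bool" where
  "d_good d Y E X1 X2 \<longleftrightarrow>
     \<bar>int (card X1) - int (card X2)\<bar> \<le> 1 \<and>
     (\<forall>y\<in>Y. real (card (nbhd E y \<inter> X1)) \<ge> d \<and> real (card (nbhd E y \<inter> X2)) \<ge> d)"

end

theory Submission
  imports Defs
begin

lemma pow_split_card:
  assumes "finite I" "D \<subseteq> I"
  shows "card {S. S \<subseteq> I \<and> P (S \<inter> D) \<and> Q (S - D)} =
         card {T. T \<subseteq> D \<and> P T} * card {U. U \<subseteq> I - D \<and> Q U}"
proof -
  have "bij_betw (\<lambda>S. (S \<inter> D, S - D)) {S. S \<subseteq> I \<and> P (S \<inter> D) \<and> Q (S - D)}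
          ({T. T \<subseteq> D \<and> P T} \<times> {U. U \<subseteq> I - D \<and> Q U})"
  proof (rule bij_betw_byWitness[where f' = "\<lambda>(T,U). T \<union> U"])
    show "\<forall>a\<in>{S. S \<subseteq> I \<and> P (S \<inter> D) \<and> Q (S - D)}. (case (a \<inter> D, a - D) of (T, U) \<Rightarrow> T \<union> U) = a"
      by auto
    show "\<forall>a'\<in>{T. T \<subseteq> D \<and> P T} \<times> {U. U \<subseteq> I - D \<and> Q U}. ((case a' of (T, U) \<Rightarrow> T \<union> U) \<inter> D, (case a' of (T, U) \<Rightarrow> T \<union> U) - D) = a'"
    proof
      fix a' assume "a' \<in> {T. T \<subseteq> D \<and> P T} \<times> {U. U \<subseteq> I - D \<and> Q U}"
      then obtain T U where "a' = (T,U)" "T \<subseteq> D" "U \<subseteq> I - D" by auto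
      then show "((case a' of (T, U) \<Rightarrow> T \<union> U) \<inter> D, (case a' of (T, U) \<Rightarrow> T \<union> U) - D) = a'"
        by auto
    qed
    show "(\<lambda>S. (S \<inter> D, S - D)) ` {S. S \<subseteq> I \<and> P (S \<inter> D) \<and> Q (S - D)} \<subseteq> {T. T \<subseteq> D \<and> P T} \<times> {U. U \<subseteq> I - D \<and> Q U}"
      by auto
    show "(\<lambda>(T, U). T \<union> U) ` ({T. T \<subseteq> D \<and> P T} \<times> {U. U \<subseteq> I - D \<and> Q U}) \<subseteq> {S. S \<subseteq> I \<and> P (S \<inter> D) \<and> Q (S - D)}"
    proof
      fix S assume "S \<in> (\<lambda>(T, U). T \<union> U) ` ({T. T \<subseteq> D \<and> P T} \<times> {U. U \<subseteq> I - D \<and> Q U})"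
      then obtain T U where "S = T \<union> U" "T \<subseteq> D" "U \<subseteq> I - D" "P T" "Q U" by auto
      moreover have "S \<inter> D = T" "S - D = U" using calculation by auto
      ultimately show "S \<in> {S. S \<subseteq> I \<and> P (S \<inter> D) \<and> Q (S - D)}" using assms by auto
    qed
  qed
  then show ?thesis by (simp add: bij_betw_same_card card_cartesian_product)
qed

lemma card_pow_sub: "finite D \<Longrightarrow> card {T. T \<subseteq> D} = 2 ^ card D"
  using card_Pow[of D] by (simp add: Pow_def)

lemma indep_count:
  assumes finI: "finite I" and DI: "D \<subseteq> I"
    and hP: "\<forall>S. S \<subseteq> I \<longrightarrow> (P S \<longleftrightarrow> P (S \<inter> D))"
    and hQ: "\<forall>S. S \<subseteq> I \<longrightarrow> (Q S \<longleftrightarrow> Q (S - D))"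
  shows "card {S. S \<subseteq> I \<and> P S \<and> Q S} * 2 ^ card I =
         card {S. S \<subseteq> I \<and> P S} * card {S. S \<subseteq> I \<and> Q S}"
proof -
  have fD: "finite D" using finI DI finite_subset by blast
  have cI: "card I = card D + card (I - D)"
    using DI fD finI by (metis add.commute card_Diff_subset card_mono le_add_diff_inverse)
  have e1: "{S. S \<subseteq> I \<and> P S \<and> Q S} = {S. S \<subseteq> I \<and> P (S \<inter> D) \<and> Q (S - D)}"
    using hP hQ by blast
  have e2: "{S. S \<subseteq> I \<and> P S} = {S. S \<subseteq> I \<and> P (S \<inter> D) \<and> (\<lambda>_. True) (S - D)}"
    using hP by blast
  have e3: "{S. S \<subseteq> I \<and> Q S} = {S. S \<subseteq> I \<and> (\<lambda>_. True) (S \<inter> D) \<and> Q (S - D)}"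
    using hQ by blast
  let ?a = "card {T. T \<subseteq> D \<and> P T}" and ?b = "card {U. U \<subseteq> I - D \<and> Q U}"
  have c1: "card {S. S \<subseteq> I \<and> P S \<and> Q S} = ?a * ?b"
    unfolding e1 by (rule pow_split_card[OF finI DI])
  have c2: "card {S. S \<subseteq> I \<and> P S} = ?a * 2 ^ card (I - D)"
    using e2 pow_split_card[OF finI DI, of P "\<lambda>_. True"] card_pow_sub[of "I - D"] finI by simp
  have c3: "card {S. S \<subseteq> I \<and> Q S} = 2 ^ card D * ?b"
    using e3 pow_split_card[OF finI DI, of "\<lambda>_. True" Q] card_pow_sub[OF fD] by simp
  show ?thesis unfolding c1 c2 c3 cI by (simp add: power_add algebra_simps)
qed

lemma lll:
  fixes I :: "nat set" and Ev :: "'e set" and A :: "'e \<Rightarrow> nat set \<Rightarrow> bool"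
    and Dp :: "'e \<Rightarrow> nat set" and p :: real and Dg :: nat
  assumes finI: "finite I" and finE: "finite Ev"
    and Dsub: "\<forall>e\<in>Ev. Dp e \<subseteq> I"
    and det: "\<forall>e\<in>Ev. \<forall>S. S \<subseteq> I \<longrightarrow> (A e S \<longleftrightarrow> A e (S \<inter> Dp e))"
    and prob: "\<forall>e\<in>Ev. real (card {S. S \<subseteq> I \<and> A e S}) \<le> p * 2 ^ card I"
    and deg: "\<forall>e\<in>Ev. card {f\<in>Ev. Dp f \<inter> Dp e \<noteq> {}} \<le> Dg"
    and p4: "4 * p * Dg \<le> 1" and p0: "0 \<le> p" and p2: "p < 1/2"
  shows "\<exists>S. S \<subseteq> I \<and> (\<forall>e\<in>Ev. \<not> A e S)"
proof -
  define cnt where "cnt T = card {S. S \<subseteq> I \<and> (\<forall>f\<in>T. \<not> A f S)}" for T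
  define bad where "bad T e = card {S. S \<subseteq> I \<and> (\<forall>f\<in>T. \<not> A f S) \<and> A e S}" for T e
  have finP: "finite {S. S \<subseteq> I \<and> R S}" for R using finI by simp
  have main: "T \<subseteq> Ev \<longrightarrow> cnt T > 0 \<and> (\<forall>e\<in>Ev - T. real (bad T e) \<le> 2 * p * cnt T)" for T
  proof (induction "card T" arbitrary: T rule: less_induct)
    case less
    show ?case
    proof
      assume TE: "T \<subseteq> Ev"
      have finT: "finite T" using TE finE finite_subset by blast
      have split: "cnt T' = cnt T'' + bad T' e" if "T'' = insert e T'" for T' T'' e
      proof -
        have "{S. S \<subseteq> I \<and> (\<forall>f\<in>T'. \<not> A f S)} = {S. S \<subseteq> I \<and> (\<forall>f\<in>T''. \<not> A f S)} \<union>
               {S. S \<subseteq> I \<and> (\<forall>f\<in>T'. \<not> A f S) \<and> A e S}" using that by auto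
        moreover have "{S. S \<subseteq> I \<and> (\<forall>f\<in>T''. \<not> A f S)} \<inter>
               {S. S \<subseteq> I \<and> (\<forall>f\<in>T'. \<not> A f S) \<and> A e S} = {}" using that by auto
        ultimately show ?thesis unfolding cnt_def bad_def
          by (simp add: card_Un_disjoint finP)
      qed
      have pos: "cnt T > 0"
      proof (cases "T = {}")
        case True
        then show ?thesis unfolding cnt_def using card_pow_sub[OF finI] by simp
      next
        case False
        then obtain e0 where e0: "e0 \<in> T" by blast
        define T' where "T' = T - {e0}"
        have cT': "card T' < card T" unfolding T'_def using e0 finT by (metis card_Diff1_less)
        have "T' \<subseteq> Ev" using TE T'_def by auto
        with less[OF cT'] have ih: "cnt T' > 0" "real (bad T' e0) \<le> 2 * p * cnt T'"
          using e0 TE T'_def by auto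
        have "T = insert e0 T'" using e0 T'_def by auto
        from split[OF this] have "cnt T' = cnt T + bad T' e0" .
        with ih p2 show ?thesis
        proof -
          have "real (cnt T') = real (cnt T) + real (bad T' e0)" using \<open>cnt T' = cnt T + bad T' e0\<close> by simp
          moreover have "2 * p * cnt T' < cnt T'" using ih p2 by simp
          ultimately show ?thesis using ih by linarith
        qed
      qed
      have bnd: "real (bad T e) \<le> 2 * p * cnt T" if eE: "e \<in> Ev - T" for e
      proof -
        define T1 where "T1 = {f\<in>T. Dp f \<inter> Dp e \<noteq> {}}"
        define T2 where "T2 = T - T1"
        have T2E: "T2 \<subseteq> Ev" using TE T2_def by auto
        have T1E: "T1 \<subseteq> {f\<in>Ev. Dp f \<inter> Dp e \<noteq> {}}" using TE T1_def by auto
        have cT1: "card T1 \<le> Dg"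
        proof -
          have "card T1 \<le> card {f\<in>Ev. Dp f \<inter> Dp e \<noteq> {}}" by (rule card_mono) (use finE T1E in auto)
          moreover have "card {f\<in>Ev. Dp f \<inter> Dp e \<noteq> {}} \<le> Dg" using deg eE by auto
          ultimately show ?thesis by linarith
        qed
        have finT1: "finite T1" using finT T1_def by simp
        have ind: "bad T2 e * 2 ^ card I = card {S. S \<subseteq> I \<and> A e S} * cnt T2"
        proof -
          have DI: "Dp e \<subseteq> I" using Dsub eE by auto
          have hP: "\<forall>S. S \<subseteq> I \<longrightarrow> (A e S \<longleftrightarrow> A e (S \<inter> Dp e))" using det eE by auto
          have hQ: "\<forall>S. S \<subseteq> I \<longrightarrow> ((\<forall>f\<in>T2. \<not> A f S) \<longleftrightarrow> (\<forall>f\<in>T2. \<not> A f (S - Dp e)))"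
          proof (intro allI impI)
            fix S assume SI: "S \<subseteq> I"
            have "A f S \<longleftrightarrow> A f (S - Dp e)" if fT2: "f \<in> T2" for f
            proof -
              have fE: "f \<in> Ev" using fT2 T2E by auto
              have disj: "Dp f \<inter> Dp e = {}" using fT2 unfolding T2_def T1_def by auto
              have "(S - Dp e) \<inter> Dp f = S \<inter> Dp f" using disj by auto
              moreover have "S - Dp e \<subseteq> I" using SI by auto
              ultimately show ?thesis using det fE SI by metis
            qed
            then show "(\<forall>f\<in>T2. \<not> A f S) \<longleftrightarrow> (\<forall>f\<in>T2. \<not> A f (S - Dp e))" by auto
          qed
          have "card {S. S \<subseteq> I \<and> A e S \<and> (\<forall>f\<in>T2. \<not> A f S)} * 2 ^ card I =
                card {S. S \<subseteq> I \<and> A e S} * card {S. S \<subseteq> I \<and> (\<forall>f\<in>T2. \<not> A f S)}"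
            by (rule indep_count[OF finI DI hP hQ])
          moreover have "{S. S \<subseteq> I \<and> A e S \<and> (\<forall>f\<in>T2. \<not> A f S)} = {S. S \<subseteq> I \<and> (\<forall>f\<in>T2. \<not> A f S) \<and> A e S}"
            by auto
          ultimately show ?thesis unfolding bad_def cnt_def by simp
        qed
        have b2: "real (bad T2 e) \<le> p * cnt T2"
        proof -
          have "real (bad T2 e) * 2 ^ card I = real (card {S. S \<subseteq> I \<and> A e S}) * cnt T2"
            using ind by (metis of_nat_mult of_nat_numeral of_nat_power)
          also have "\<dots> \<le> p * 2 ^ card I * cnt T2" using prob eE by (simp add: mult_right_mono)
          finally show ?thesis by (simp add: mult.commute mult.left_commute)
        qed
        have bT: "bad T e \<le> bad T2 e" unfolding bad_def
          by (rule card_mono[OF finP]) (auto simp: T2_def)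
        have cnt2: "real (cnt T2) \<le> 2 * cnt T"
        proof (cases "T1 = {}")
          case True
          then show ?thesis using T2_def by simp
        next
          case False
          have cT2: "card T2 < card T"
            by (rule psubset_card_mono[OF finT]) (use False in \<open>auto simp: T2_def T1_def\<close>)
          have ih: "\<forall>f\<in>Ev - T2. real (bad T2 f) \<le> 2 * p * cnt T2" using less[OF cT2] T2E by auto
          have sub: "{S. S \<subseteq> I \<and> (\<forall>f\<in>T2. \<not> A f S)} \<subseteq> {S. S \<subseteq> I \<and> (\<forall>f\<in>T. \<not> A f S)} \<union>
                 (\<Union>f\<in>T1. {S. S \<subseteq> I \<and> (\<forall>g\<in>T2. \<not> A g S) \<and> A f S})"
            unfolding T2_def by auto
          have "cnt T2 \<le> card ({S. S \<subseteq> I \<and> (\<forall>f\<in>T. \<not> A f S)} \<union>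
                 (\<Union>f\<in>T1. {S. S \<subseteq> I \<and> (\<forall>g\<in>T2. \<not> A g S) \<and> A f S}))"
            unfolding cnt_def by (rule card_mono[OF _ sub]) (simp add: finP finT1)
          also have "\<dots> \<le> cnt T + card (\<Union>f\<in>T1. {S. S \<subseteq> I \<and> (\<forall>g\<in>T2. \<not> A g S) \<and> A f S})"
            unfolding cnt_def by (rule card_Un_le)
          also have "\<dots> \<le> cnt T + (\<Sum>f\<in>T1. bad T2 f)"
            unfolding bad_def using card_UN_le[OF finT1] by simp
          finally have "real (cnt T2) \<le> real (cnt T) + (\<Sum>f\<in>T1. real (bad T2 f))"
            by (metis of_nat_add of_nat_le_iff of_nat_sum)
          also have "(\<Sum>f\<in>T1. real (bad T2 f)) \<le> (\<Sum>f\<in>T1. 2 * p * cnt T2)"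
            by (rule sum_mono) (use ih TE T1_def T2_def in auto)
          also have "\<dots> = card T1 * (2 * p * cnt T2)" by simp
          also have "\<dots> \<le> Dg * (2 * p * cnt T2)"
            by (rule mult_right_mono) (use cT1 p0 in auto)
          also have "\<dots> \<le> cnt T2 / 2"
          proof -
            have "Dg * (2 * p * cnt T2) = (4 * p * Dg) * cnt T2 / 2" by simp
            also have "\<dots> \<le> 1 * cnt T2 / 2"
              using mult_right_mono[OF p4, of "real (cnt T2)"] by (intro divide_right_mono) auto
            finally show ?thesis by simp
          qed
          finally show ?thesis by simp
        qed
        have "real (bad T e) \<le> p * cnt T2" using bT b2 by linarith
        also have "\<dots> \<le> p * (2 * cnt T)" using cnt2 p0 by (simp add: mult_left_mono)
        finally show ?thesis by simp
      qed
      show "cnt T > 0 \<and> (\<forall>e\<in>Ev - T. real (bad T e) \<le> 2 * p * cnt T)" using pos bnd by auto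
    qed
  qed
  have "cnt Ev > 0" using main[of Ev] by auto
  then have "{S. S \<subseteq> I \<and> (\<forall>f\<in>Ev. \<not> A f S)} \<noteq> {}" unfolding cnt_def by (metis card.empty less_irrefl)
  then show ?thesis by auto
qed

lemma sum_Pow_insert:
  assumes "finite I" "a \<notin> I"
  shows "sum g (Pow (insert a I)) = (\<Sum>S\<in>Pow I. g S + g (insert a S))"
proof -
  have inj: "inj_on (insert a) (Pow I)"
  proof (rule inj_onI)
    fix A B assume AB: "A \<in> Pow I" "B \<in> Pow I" "insert a A = insert a B"
    then have "a \<notin> A" "a \<notin> B" using assms(2) by auto
    then show "A = B" using AB(3) insert_ident[of a A B] by simp
  qed
  have disj: "Pow I \<inter> insert a ` Pow I = {}" using assms(2) by auto
  have "sum g (Pow (insert a I)) = sum g (Pow I) + sum g (insert a ` Pow I)"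
    unfolding Pow_insert using assms(1) disj by (simp add: sum.union_disjoint)
  also have "sum g (insert a ` Pow I) = (\<Sum>S\<in>Pow I. g (insert a S))"
    using sum.reindex[OF inj] by simp
  finally show ?thesis by (simp add: sum.distrib)
qed

lemma card_le1: "finite A \<Longrightarrow> (\<forall>x\<in>A. \<forall>y\<in>A. x = y) \<Longrightarrow> card A \<le> 1"
  by (metis card_le_Suc0_iff_eq One_nat_def)

lemma sq: fixes l :: real shows "2 * l \<le> 2 * ((1 + l) / 2)^2"
proof -
  have "0 \<le> (1 - l)^2" by simp
  moreover have "2 * ((1 + l) / 2)^2 - 2 * l = (1 - l)^2 / 2" by (simp add: power2_eq_square field_simps)
  ultimately show ?thesis by linarith
qed
lemma two_term:
  fixes l :: real and b0 b1 :: nat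
  assumes "0 < l" "l \<le> 1" "b0 \<le> 1" "b1 \<le> 1"
  shows "l ^ b1 + l ^ b0 \<le> 2 * ((1 + l) / 2) ^ (b0 + b1)"
proof -
  have "b0 = 0 \<or> b0 = 1" "b1 = 0 \<or> b1 = 1" using assms by auto
  then show ?thesis
  proof (elim disjE)
    assume "b0 = 0" "b1 = 0" then show ?thesis by simp
  next
    assume "b0 = 0" "b1 = 1" then show ?thesis by simp
  next
    assume "b0 = 1" "b1 = 0" then show ?thesis by simp
  next
    assume "b0 = 1" "b1 = 1"
    then show ?thesis using sq[of l] by (simp add: numeral_2_eq_2)
  qed
qed

lemma expmom:
  fixes I :: "nat set" and N :: "'v set" and idx :: "'v \<Rightarrow> nat" and \<beta> :: "'v \<Rightarrow> bool" and l :: real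
  assumes finI: "finite I" and l0: "0 < l" and l1: "l \<le> 1"
  shows "finite N \<Longrightarrow> (\<forall>x\<in>N. \<forall>x'\<in>N. x \<noteq> x' \<and> idx x = idx x' \<longrightarrow> \<beta> x \<noteq> \<beta> x') \<Longrightarrow>
    (\<Sum>S\<in>Pow I. l ^ card {x\<in>N. (idx x \<in> S) \<noteq> \<beta> x})
      \<le> 2 ^ card I * ((1 + l) / 2) ^ card {x\<in>N. idx x \<in> I} * l ^ card {x\<in>N. idx x \<notin> I \<and> \<beta> x}"
  using finI
proof (induction I arbitrary: N rule: finite_induct)
  case empty
  have "{x \<in> N. (idx x \<in> {}) \<noteq> \<beta> x} = {x\<in>N. idx x \<notin> {} \<and> \<beta> x}" by auto
  then show ?case by simp
next
  case (insert a I)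
  define Na where "Na = {x\<in>N. idx x = a}"
  define N' where "N' = N - Na"
  have finN': "finite N'" using insert.prems N'_def by auto
  have opp': "\<forall>x\<in>N'. \<forall>x'\<in>N'. x \<noteq> x' \<and> idx x = idx x' \<longrightarrow> \<beta> x \<noteq> \<beta> x'"
    using insert.prems N'_def by auto
  define b1 where "b1 = card {x\<in>Na. \<beta> x}"
  define b0 where "b0 = card {x\<in>Na. \<not> \<beta> x}"
  have finNa: "finite Na" using insert.prems Na_def by auto
  have b1le: "b1 \<le> 1" unfolding b1_def
    by (rule card_le1) (use finNa in simp, use insert.prems(2) Na_def in auto)
  have b0le: "b0 \<le> 1" unfolding b0_def
    by (rule card_le1) (use finNa in simp, use insert.prems(2) Na_def in auto)
  have cNa: "card Na = b0 + b1" unfolding b0_def b1_def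
  proof -
    have "Na = {x\<in>Na. \<not> \<beta> x} \<union> {x\<in>Na. \<beta> x}" by auto
    then have "card Na = card ({x\<in>Na. \<not> \<beta> x} \<union> {x\<in>Na. \<beta> x})" by simp
    also have "\<dots> = card {x\<in>Na. \<not> \<beta> x} + card {x\<in>Na. \<beta> x}"
      by (rule card_Un_disjoint) (use finNa in auto)
    finally show "card Na = card {x\<in>Na. \<not> \<beta> x} + card {x\<in>Na. \<beta> x}" .
  qed
  have split1: "card {x\<in>N. (idx x \<in> S) \<noteq> \<beta> x} = card {x\<in>N'. (idx x \<in> S) \<noteq> \<beta> x} + b1"
    if "S \<in> Pow I" for S
  proof -
    have aS: "a \<notin> S" using that insert.hyps by auto
    have "{x\<in>N. (idx x \<in> S) \<noteq> \<beta> x} = {x\<in>N'. (idx x \<in> S) \<noteq> \<beta> x} \<union> {x\<in>Na. \<beta> x}"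
      using aS unfolding N'_def Na_def by auto
    moreover have "{x\<in>N'. (idx x \<in> S) \<noteq> \<beta> x} \<inter> {x\<in>Na. \<beta> x} = {}" unfolding N'_def by auto
    ultimately show ?thesis unfolding b1_def using finN' finNa by (simp add: card_Un_disjoint)
  qed
  have split2: "card {x\<in>N. (idx x \<in> insert a S) \<noteq> \<beta> x} = card {x\<in>N'. (idx x \<in> S) \<noteq> \<beta> x} + b0"
    if "S \<in> Pow I" for S
  proof -
    have "{x\<in>N. (idx x \<in> insert a S) \<noteq> \<beta> x} = {x\<in>N'. (idx x \<in> S) \<noteq> \<beta> x} \<union> {x\<in>Na. \<not> \<beta> x}"
      unfolding N'_def Na_def by auto
    moreover have "{x\<in>N'. (idx x \<in> S) \<noteq> \<beta> x} \<inter> {x\<in>Na. \<not> \<beta> x} = {}" unfolding N'_def by auto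
    ultimately show ?thesis unfolding b0_def using finN' finNa by (simp add: card_Un_disjoint)
  qed
  let ?q = "(1 + l) / 2"
  have q0: "0 \<le> ?q" using l0 by simp
  have "(\<Sum>S\<in>Pow (insert a I). l ^ card {x\<in>N. (idx x \<in> S) \<noteq> \<beta> x})
      = (\<Sum>S\<in>Pow I. l ^ card {x\<in>N'. (idx x \<in> S) \<noteq> \<beta> x} * (l ^ b1 + l ^ b0))"
    unfolding sum_Pow_insert[OF insert.hyps(1,2)]
  proof (rule sum.cong[OF refl])
    fix S assume "S \<in> Pow I"
    then show "l ^ card {x\<in>N. (idx x \<in> S) \<noteq> \<beta> x} + l ^ card {x\<in>N. (idx x \<in> insert a S) \<noteq> \<beta> x} =
      l ^ card {x\<in>N'. (idx x \<in> S) \<noteq> \<beta> x} * (l ^ b1 + l ^ b0)"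
      unfolding split1[OF \<open>S \<in> Pow I\<close>] split2[OF \<open>S \<in> Pow I\<close>] by (simp add: power_add algebra_simps)
  qed
  also have "\<dots> = (\<Sum>S\<in>Pow I. l ^ card {x\<in>N'. (idx x \<in> S) \<noteq> \<beta> x}) * (l ^ b1 + l ^ b0)"
    by (simp add: sum_distrib_right)
  also have "\<dots> \<le> (2 ^ card I * ?q ^ card {x\<in>N'. idx x \<in> I} * l ^ card {x\<in>N'. idx x \<notin> I \<and> \<beta> x})
                 * (2 * ?q ^ (b0 + b1))"
    by (rule mult_mono[OF insert.IH[OF finN' opp'] two_term[OF l0 l1 b0le b1le]])
       (use l0 in \<open>auto intro!: add_nonneg_nonneg\<close>)
  also have "\<dots> = 2 ^ card (insert a I) * ?q ^ card {x\<in>N. idx x \<in> insert a I} * l ^ card {x\<in>N. idx x \<notin> insert a I \<and> \<beta> x}"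
  proof -
    have e1: "{x\<in>N'. idx x \<notin> I \<and> \<beta> x} = {x\<in>N. idx x \<notin> insert a I \<and> \<beta> x}"
      unfolding N'_def Na_def by auto
    have "{x\<in>N. idx x \<in> insert a I} = {x\<in>N'. idx x \<in> I} \<union> Na" unfolding N'_def Na_def by auto
    moreover have "{x\<in>N'. idx x \<in> I} \<inter> Na = {}" unfolding N'_def by auto
    ultimately have e2: "card {x\<in>N. idx x \<in> insert a I} = card {x\<in>N'. idx x \<in> I} + (b0 + b1)"
      using finN' finNa cNa by (simp add: card_Un_disjoint)
    show ?thesis unfolding e1 e2 using insert.hyps by (simp add: power_add algebra_simps)
  qed
  finally show ?case .
qed

lemma tail:
  fixes I :: "nat set" and N :: "'v set" and idx :: "'v \<Rightarrow> nat" and \<beta> :: "'v \<Rightarrow> bool" and m0 c :: nat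
  assumes finI: "finite I" and finN: "finite N"
    and opp: "\<forall>x\<in>N. \<forall>x'\<in>N. x \<noteq> x' \<and> idx x = idx x' \<longrightarrow> \<beta> x \<noteq> \<beta> x'"
    and cle: "c \<le> card {x\<in>N. idx x \<in> I}"
  shows "real (card {S. S \<subseteq> I \<and> card {x\<in>N. (idx x \<in> S) \<noteq> \<beta> x} \<le> m0})
           \<le> 2 ^ card I * (3/2) ^ m0 * (5/6) ^ c"
proof -
  let ?l = "2/3 :: real"
  let ?f = "\<lambda>S. card {x\<in>N. (idx x \<in> S) \<noteq> \<beta> x}"
  let ?B = "{S. S \<subseteq> I \<and> ?f S \<le> m0}"
  have BP: "?B \<subseteq> Pow I" by auto
  have finB: "finite ?B" using finI by simp
  have "real (card ?B) * ?l ^ m0 = (\<Sum>S\<in>?B. ?l ^ m0)" by simp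
  also have "\<dots> \<le> (\<Sum>S\<in>?B. ?l ^ ?f S)"
  proof (rule sum_mono)
    fix S assume "S \<in> ?B"
    then have "?f S \<le> m0" by simp
    then show "?l ^ m0 \<le> ?l ^ ?f S" by (rule power_decreasing) simp_all
  qed
  also have "\<dots> \<le> (\<Sum>S\<in>Pow I. ?l ^ ?f S)"
    by (rule sum_mono2) (use finI BP in auto)
  also have "\<dots> \<le> 2 ^ card I * ((1 + ?l) / 2) ^ card {x\<in>N. idx x \<in> I} * ?l ^ card {x\<in>N. idx x \<notin> I \<and> \<beta> x}"
    by (rule expmom[OF finI _ _ finN opp]) simp_all
  also have "\<dots> \<le> 2 ^ card I * (5/6) ^ c * 1"
  proof (rule mult_mono)
    have "((1 + ?l) / 2) ^ card {x \<in> N. idx x \<in> I} \<le> (5 / 6) ^ c"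
      using cle by (simp add: power_decreasing)
    then show "2 ^ card I * ((1 + ?l) / 2) ^ card {x \<in> N. idx x \<in> I} \<le> 2 ^ card I * (5 / 6) ^ c"
      by (rule mult_left_mono) simp
    show "?l ^ card {x\<in>N. idx x \<notin> I \<and> \<beta> x} \<le> 1" by (rule power_le_one) simp_all
  qed simp_all
  finally have "real (card ?B) * ?l ^ m0 \<le> 2 ^ card I * (5/6) ^ c" by simp
  then have "real (card ?B) * ?l ^ m0 * (3/2) ^ m0 \<le> 2 ^ card I * (5/6) ^ c * (3/2) ^ m0"
    by (rule mult_right_mono) simp
  moreover have eq: "?l ^ m0 * (3/2) ^ m0 = 1"
  proof -
    have "?l ^ m0 * (3/2) ^ m0 = (?l * (3/2)) ^ m0" by (rule power_mult_distrib[symmetric])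
    also have "\<dots> = 1" by simp
    finally show ?thesis .
  qed
  moreover have "real (card ?B) = real (card ?B) * ?l ^ m0 * (3/2) ^ m0"
    unfolding mult.assoc eq by simp
  ultimately have "real (card ?B) \<le> 2 ^ card I * (5/6) ^ c * (3/2) ^ m0"
    by linarith
  moreover have "(2::real) ^ card I * (5/6) ^ c * (3/2) ^ m0 = 2 ^ card I * (3/2) ^ m0 * (5/6) ^ c"
    by (simp only: mult_ac)
  ultimately show ?thesis by simp
qed

lemma bits_eq:
  fixes a b :: nat
  assumes "a < 2 ^ m" "b < 2 ^ m" "\<forall>n<m. bit a n = bit b n"
  shows "a = b"
proof -
  have "take_bit m a = take_bit m b"
    by (rule bit_eqI) (use assms(3) in \<open>auto simp: bit_take_bit_iff\<close>)
  then show ?thesis using assms(1,2) by (simp add: take_bit_nat_eq_self)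
qed

lemma bit_high:
  fixes a :: nat
  assumes "a < 2 ^ m" "m \<le> n"
  shows "\<not> bit a n"
proof -
  have "a < 2 ^ n" using assms by (meson order_less_le_trans one_le_numeral power_increasing)
  then have "a div 2 ^ n = 0" by simp
  then show ?thesis by (simp add: bit_nat_def)
qed

lemma greedy_col:
  fixes V :: "'a set" and R :: "'a \<Rightarrow> 'a \<Rightarrow> bool" and K :: nat
  assumes finV: "finite V" and deg: "\<forall>v\<in>V. card {u\<in>V. R v u} \<le> K"
    and sym: "\<forall>u v. R u v \<longrightarrow> R v u"
  shows "\<exists>c. (\<forall>v\<in>V. c v \<le> K) \<and> (\<forall>u\<in>V. \<forall>v\<in>V. R u v \<and> u \<noteq> v \<longrightarrow> c u \<noteq> c v)"
proof -
  have "W \<subseteq> V \<Longrightarrow> \<exists>c. (\<forall>v\<in>W. c v \<le> K) \<and> (\<forall>u\<in>W. \<forall>v\<in>W. R u v \<and> u \<noteq> v \<longrightarrow> c u \<noteq> c v)"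
    if "finite W" for W
    using that
  proof (induction W rule: finite_induct)
    case empty
    then show ?case by auto
  next
    case (insert a W)
    then obtain c where c: "\<forall>v\<in>W. c v \<le> K" "\<forall>u\<in>W. \<forall>v\<in>W. R u v \<and> u \<noteq> v \<longrightarrow> c u \<noteq> c v"
      by auto
    have aV: "a \<in> V" using insert by auto
    have "card (c ` {u\<in>W. R a u}) \<le> card {u\<in>W. R a u}"
      by (rule card_image_le) (use insert in auto)
    also have "\<dots> \<le> card {u\<in>V. R a u}"
      by (rule card_mono) (use finV insert in auto)
    also have "\<dots> \<le> K" using deg aV by auto
    finally have "card (c ` {u\<in>W. R a u}) < card {0..K}" by simp
    then have "\<not> {0..K} \<subseteq> c ` {u\<in>W. R a u}"
    proof (intro notI)
      assume lt: "card (c ` {u\<in>W. R a u}) < card {0..K}" and sub: "{0..K} \<subseteq> c ` {u\<in>W. R a u}"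
      have fin: "finite (c ` {u\<in>W. R a u})" using insert.hyps(1) by simp
      have "card {0..K} \<le> card (c ` {u\<in>W. R a u})" by (rule card_mono[OF fin sub])
      with lt show False by simp
    qed
    then obtain col where col: "col \<in> {0..K}" "col \<notin> c ` {u\<in>W. R a u}" by blast
    define c' where "c' = c(a := col)"
    have "\<forall>v\<in>insert a W. c' v \<le> K" using c col c'_def by auto
    moreover have "\<forall>u\<in>insert a W. \<forall>v\<in>insert a W. R u v \<and> u \<noteq> v \<longrightarrow> c' u \<noteq> c' v"
    proof (intro ballI impI)
      fix u v assume uv: "u \<in> insert a W" "v \<in> insert a W" "R u v \<and> u \<noteq> v"
      show "c' u \<noteq> c' v"
      proof (cases "u = a")
        case True
        then have "v \<in> {u\<in>W. R a u}" using uv by auto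
        then show ?thesis using True col(2) uv c'_def by (metis fun_upd_other fun_upd_same image_eqI)
      next
        case False
        note uF = False
        show ?thesis
        proof (cases "v = a")
          case True
          then have "u \<in> {u\<in>W. R a u}" using uv sym uF by auto
          then show ?thesis using True col(2) uv c'_def by (metis fun_upd_other fun_upd_same image_eqI)
        next
          case False
          then show ?thesis using uF uv c c'_def by auto
        qed
      qed
    qed
    ultimately show ?case by blast
  qed
  then show ?thesis using finV by blast
qed

lemma num_bound:
  fixes u :: nat
  assumes "u \<ge> 60"
  shows "32000000 * (3/2::real)^20 * (real u + 1)^3 * (53/100)^u \<le> 1"
  using assms
proof (induction u rule: dec_induct)
  case base
  have a: "(3/2::real)^20 \<le> 3326" by (simp add: power_divide)
  have b: "(53/100::real)^10 \<le> 1/570" by (simp add: power_divide)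
  have e: "(53/100::real)^60 = ((53/100)^10)^6"
  proof -
    have "(60::nat) = 10 * 6" by simp
    then show ?thesis by (simp only: power_mult)
  qed
  have c: "(53/100::real)^60 \<le> (1/570)^6"
    unfolding e by (rule power_mono[OF b]) (rule zero_le_power, simp)
  have n0: "0 \<le> (real 60 + 1)^3" by (rule zero_le_power) simp
  have "32000000 * (3/2::real)^20 * (real 60 + 1)^3 \<le> 32000000 * 3326 * (real 60 + 1)^3"
    by (rule mult_right_mono[OF _ n0]) (use a in simp)
  then have "32000000 * (3/2::real)^20 * (real 60 + 1)^3 * (53/100)^60
        \<le> 32000000 * 3326 * (real 60 + 1)^3 * (1/570)^6"
    by (rule mult_mono[OF _ c]) (simp_all only: zero_le_power zero_le_numeral zero_le_mult_iff divide_nonneg_nonneg n0 simp_thms)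
  also have "\<dots> \<le> 1" by (simp add: power_divide)
  finally show ?case .
next
  case (step u)
  have r: "(real u + 2)^3 * (53/100) \<le> (real u + 1)^3"
  proof -
    have "(real u + 2) \<le> (6/5) * (real u + 1)" using step(1) by simp
    then have "(real u + 2)^3 \<le> ((6/5) * (real u + 1))^3" by (rule power_mono) simp
    also have "\<dots> = (216/125) * (real u + 1)^3" unfolding power_mult_distrib by (simp add: power_divide)
    finally have "(real u + 2)^3 \<le> (216/125) * (real u + 1)^3" .
    moreover have "0 \<le> (real u + 1)^3" by simp
    ultimately show ?thesis by linarith
  qed
  have "32000000 * (3/2::real)^20 * (real (Suc u) + 1)^3 * (53/100)^(Suc u)
      = 32000000 * (3/2::real)^20 * ((real u + 2)^3 * (53/100)) * (53/100)^u"
    by (simp add: algebra_simps)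
  also have "\<dots> \<le> 32000000 * (3/2::real)^20 * (real u + 1)^3 * (53/100)^u"
    using r by (intro mult_right_mono mult_left_mono) auto
  also have "\<dots> \<le> 1" using step(3) .
  finally show ?case .
qed

lemma powr_small:
  fixes d :: real
  assumes "d \<ge> 1000000"
  shows "d powr (2/3) \<le> d / 100"
proof -
  define a where "a = d powr (1/3)"
  have d0: "d > 0" using assms by simp
  have a3: "a ^ 3 = d" unfolding a_def using d0
    by (simp add: powr_realpow[symmetric] powr_powr)
  have a2: "d powr (2/3) = a ^ 2" unfolding a_def using d0
    by (simp add: powr_realpow[symmetric] powr_powr)
  have a0: "a > 0" unfolding a_def using d0 by simp
  have "100 ^ 3 \<le> a ^ 3" using a3 assms by simp
  then have a100: "100 \<le> a" using a0 power_le_imp_le_base[of 100 2 a] by (simp add: numeral_3_eq_3)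
  have "a ^ 2 * 100 \<le> a ^ 2 * a" using a100 by (simp add: mult_left_mono)
  then show ?thesis using a2 a3 by (simp add: power3_eq_cube power2_eq_square algebra_simps)
qed

lemma odd_pos_diff:
  fixes a b :: nat
  assumes "a \<noteq> b" "a div 2 = b div 2"
  shows "odd a \<noteq> odd b"
  using assms by (metis div_mult_mod_eq odd_iff_mod_2_eq_one even_iff_mod_2_eq_zero)

lemma main_lemma:
  fixes d n kk \<Delta> :: nat and X Y :: "nat set" and E G :: "nat \<Rightarrow> nat \<Rightarrow> bool"
  assumes dbig: "d \<ge> 1000000" and bb: "balanced_bipartite n X Y E"
    and degs: "\<forall>v\<in>{1..n}. real d / 2 - real d powr (2/3) \<le> real (card (nbhd E v)) \<and>
                    real (card (nbhd E v)) \<le> real d / 2 + real d powr (2/3)"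
    and gG: "simple_graph_on X G" and degG: "\<forall>v\<in>X. card (nbhd G v) \<le> \<Delta>"
    and D1: "1 \<le> \<Delta>" and D2: "\<Delta> \<le> d"
    and kk: "kk = nat \<lceil>log 2 (real \<Delta>)\<rceil> + 8"
  shows "\<exists>X1 X2 :: nat \<Rightarrow> nat set.
          (\<forall>j\<in>{1..kk}. bipartition_of X (X1 j) (X2 j)) \<and>
          (\<forall>u v. G u v \<longrightarrow> (\<exists>j\<in>{1..kk}. (u \<in> X1 j \<and> v \<in> X2 j) \<or> (v \<in> X1 j \<and> u \<in> X2 j))) \<and>
          (\<forall>j\<in>{1..kk}. d_good (real d / 5) Y E (X1 j) (X2 j))"
proof -
  have XY: "X \<union> Y = {1..n}" "X \<inter> Y = {}" and Esym: "\<forall>u v. E u v \<longrightarrow> E v u"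
    and Ebip: "\<forall>u v. E u v \<longrightarrow> (u \<in> X \<and> v \<in> Y) \<or> (u \<in> Y \<and> v \<in> X)"
    using bb unfolding balanced_bipartite_def simple_graph_on_def by auto
  have finX: "finite X"
  proof (rule finite_subset)
    show "X \<subseteq> {1..n}" using XY(1) by blast
  qed simp
  have finY: "finite Y"
  proof (rule finite_subset)
    show "Y \<subseteq> {1..n}" using XY(1) by blast
  qed simp
  have NyX: "nbhd E y \<subseteq> X" if "y \<in> Y" for y
    using that Ebip XY(2) unfolding nbhd_def by auto
  have NxY: "nbhd E x \<subseteq> Y" if "x \<in> X" for x
    using that Ebip XY(2) unfolding nbhd_def by auto
  have finNE: "finite (nbhd E v)" if "v \<in> X \<union> Y" for v
  proof (cases "v \<in> X")
    case True
    show ?thesis by (rule finite_subset[OF NxY[OF True] finY])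
  next
    case False
    then have "v \<in> Y" using that by simp
    show ?thesis by (rule finite_subset[OF NyX[OF \<open>v \<in> Y\<close>] finX])
  qed
  have Gsym: "\<forall>u v. G u v \<longrightarrow> G v u" and Girr: "\<forall>u. \<not> G u u" and GX: "\<forall>u v. G u v \<longrightarrow> u \<in> X \<and> v \<in> X"
    using gG unfolding simple_graph_on_def by auto
  have NGX: "nbhd G v \<subseteq> X" for v using GX unfolding nbhd_def by auto
  have finNG: "finite (nbhd G v)" for v by (rule finite_subset[OF NGX finX])
  have dpos: "real d \<ge> 1000000" using dbig by simp
  have psmall: "real d powr (2/3) \<le> real d / 100" by (rule powr_small[OF dpos])
  have degle: "card (nbhd E v) \<le> d" if "v \<in> X \<union> Y" for v
  proof -
    have "v \<in> {1..n}" using that XY by simp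
    then have "real (card (nbhd E v)) \<le> real d / 2 + real d powr (2/3)" using degs by blast
    then have "real (card (nbhd E v)) \<le> real d" using psmall by linarith
    then show ?thesis by simp
  qed
  have degge: "49 * real d / 100 \<le> real (card (nbhd E v))" if "v \<in> X \<union> Y" for v
  proof -
    have "v \<in> {1..n}" using that XY by simp
    then have "real d / 2 - real d powr (2/3) \<le> real (card (nbhd E v))" using degs by blast
    then show ?thesis using psmall by linarith
  qed
  obtain pos where pos: "bij_betw pos X {0..<card X}" using ex_bij_betw_finite_nat[OF finX] by blast
  have posinj: "inj_on pos X" using pos unfolding bij_betw_def by auto
  have posrange: "\<forall>x\<in>X. pos x < card X" using pos unfolding bij_betw_def by auto
  define inv where "inv = inv_into X pos"
  have inv: "inv t \<in> X \<and> pos (inv t) = t" if "t < card X" for t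
  proof -
    have "t \<in> pos ` X" using pos that unfolding bij_betw_def by auto
    then show ?thesis unfolding inv_def by (simp add: inv_into_into f_inv_into_f)
  qed
  define idx where "idx x = pos x div 2" for x
  define h where "h = card X div 2"
  define I where "I = {0..<h}"
  have finI: "finite I" unfolding I_def by simp
  have cardI: "card I = h" unfolding I_def by simp
  have cX: "card X \<le> 2 * h + 1" unfolding h_def by simp
  have idxh: "idx x \<le> h" if "x \<in> X" for x
    using posrange that cX unfolding idx_def by fastforce
  have posinj': "x = x'" if "x \<in> X" "x' \<in> X" "pos x = pos x'" for x x'
    using posinj that unfolding inj_on_def by blast
  have opp_pos: "odd (pos x) \<noteq> odd (pos x')" if "x \<in> X" "x' \<in> X" "x \<noteq> x'" "idx x = idx x'" for x x'
  proof -
    have "pos x \<noteq> pos x'" using posinj' that by blast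
    then show ?thesis using odd_pos_diff that(4) unfolding idx_def by blast
  qed
  have P2: "card {x\<in>X. idx x = i} \<le> 2" for i
  proof -
    have sub: "pos ` {x\<in>X. idx x = i} \<subseteq> {2*i, 2*i+1}" unfolding idx_def by auto
    have "card (pos ` {x\<in>X. idx x = i}) \<le> card {2*i, 2*i+1}"
      by (rule card_mono[OF _ sub]) simp
    also have "\<dots> = 2" by simp
    finally have "card (pos ` {x\<in>X. idx x = i}) \<le> 2" .
    moreover have "card (pos ` {x\<in>X. idx x = i}) = card {x\<in>X. idx x = i}"
      by (rule card_image) (rule inj_on_subset[OF posinj], blast)
    ultimately show ?thesis by simp
  qed
  have finP: "finite {x\<in>X. idx x = i}" for i using finX by simp
  define L where "L = nat \<lceil>log 2 (real \<Delta>)\<rceil>"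
  have kkL: "kk = L + 8" using kk L_def by simp
  have DL: "\<Delta> \<le> 2 ^ L"
  proof -
    have "real \<Delta> = 2 powr (log 2 (real \<Delta>))" using D1 by simp
    also have "\<dots> \<le> 2 powr (real L)" unfolding L_def by (rule powr_mono) (simp_all add: real_nat_ceiling_ge)
    also have "\<dots> = 2 ^ L" by (simp add: powr_realpow)
    finally have "real \<Delta> \<le> real (2 ^ L)" by simp
    then show ?thesis by linarith
  qed
  have LD: "L \<le> \<Delta>"
  proof -
    have "real \<Delta> < 2 powr (real \<Delta>)" using less_exp[of \<Delta>] by (simp add: powr_realpow)
    then have lt: "log 2 (real \<Delta>) < real \<Delta>" using D1 by (simp add: log_less_iff)
    then show ?thesis unfolding L_def using lt by simp
  qed
  have kk2d: "kk \<le> 2 * d" using kkL LD D2 dbig by simp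
  have kk1: "kk \<ge> 1" using kkL by simp
  have colbound: "2 * \<Delta> < 2 ^ (kk - 1)"
  proof -
    have "kk - 1 = L + 7" using kkL by simp
    then have "(2::nat) ^ (kk - 1) = 128 * 2 ^ L" by (simp add: power_add)
    then show ?thesis using DL D1 by simp
  qed
  define R where "R i i' \<longleftrightarrow> (\<exists>u\<in>X. \<exists>v\<in>X. idx u = i \<and> idx v = i' \<and> G u v)" for i i'
  have Rsym: "\<forall>i i'. R i i' \<longrightarrow> R i' i" unfolding R_def using Gsym by blast
  have Rdeg: "\<forall>i\<in>{0..h}. card {i'\<in>{0..h}. R i i'} \<le> 2 * \<Delta>"
  proof
    fix i assume "i \<in> {0..h}"
    have sub: "{i'\<in>{0..h}. R i i'} \<subseteq> idx ` (\<Union>x\<in>{x\<in>X. idx x = i}. nbhd G x)"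
      unfolding R_def nbhd_def by auto
    have "card {i'\<in>{0..h}. R i i'} \<le> card (idx ` (\<Union>x\<in>{x\<in>X. idx x = i}. nbhd G x))"
      by (rule card_mono[OF _ sub]) (use finP finNG in simp)
    also have "\<dots> \<le> card (\<Union>x\<in>{x\<in>X. idx x = i}. nbhd G x)" by (rule card_image_le) (use finP finNG in simp)
    also have "\<dots> \<le> (\<Sum>x\<in>{x\<in>X. idx x = i}. card (nbhd G x))" by (rule card_UN_le[OF finP])
    also have "\<dots> \<le> (\<Sum>x\<in>{x\<in>X. idx x = i}. \<Delta>)" by (rule sum_mono) (use degG in simp)
    also have "\<dots> = card {x\<in>X. idx x = i} * \<Delta>" by simp
    also have "\<dots> \<le> 2 * \<Delta>" using P2[of i] by (simp add: mult_right_mono)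
    finally show "card {i'\<in>{0..h}. R i i'} \<le> 2 * \<Delta>" .
  qed
  obtain col where colK: "\<forall>i\<in>{0..h}. col i \<le> 2 * \<Delta>"
    and colP: "\<forall>i\<in>{0..h}. \<forall>i'\<in>{0..h}. R i i' \<and> i \<noteq> i' \<longrightarrow> col i \<noteq> col i'"
    using greedy_col[of "{0..h}" R "2 * \<Delta>"] Rdeg Rsym by auto
  have colB: "col (idx x) < 2 ^ (kk - 1)" if "x \<in> X" for x
    using colK idxh[OF that] colbound by force
  define \<beta> where "\<beta> j x = (bit (col (idx x)) (j - 1) \<noteq> odd (pos x))" for j x
  define side where "side j S x = ((idx x \<in> S) \<noteq> \<beta> j x)" for j S x
  define Xa where "Xa S j = {x\<in>X. side j S x}" for S j
  define Xb where "Xb S j = {x\<in>X. \<not> side j S x}" for S j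
  have opp: "\<beta> j x \<noteq> \<beta> j x'" if "x \<in> X" "x' \<in> X" "x \<noteq> x'" "idx x = idx x'" for j x x'
    using opp_pos[OF that] that(4) unfolding \<beta>_def by auto
  define u where "u = d div 100"
  have u60: "u \<ge> 60" using dbig unfolding u_def by simp
  have du: "100 * u \<le> d" "d < 100 * (u + 1)" unfolding u_def by simp_all
  define p :: real where "p = 2 * (3/2) ^ (20 * (u + 1)) * (5/6) ^ (48 * u)"
  define Dg where "Dg = 4 * d ^ 3"
  define Ev where "Ev = Y \<times> {1..kk}"
  define A where "A e S \<longleftrightarrow> (real (card (nbhd E (fst e) \<inter> Xa S (snd e))) < real d / 5 \<or>
                                 real (card (nbhd E (fst e) \<inter> Xb S (snd e))) < real d / 5)" for e S
  define Dp where "Dp e = idx ` nbhd E (fst e) \<inter> I" for e :: "nat \<times> nat"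
  have NXa: "nbhd E y \<inter> Xa S j = {x\<in>nbhd E y. (idx x \<in> S) \<noteq> \<beta> j x}" if "y \<in> Y" for y S j
    using NyX[OF that] unfolding Xa_def side_def by auto
  have NXb: "nbhd E y \<inter> Xb S j = {x\<in>nbhd E y. (idx x \<in> S) \<noteq> (\<not> \<beta> j x)}" if "y \<in> Y" for y S j
    using NyX[OF that] unfolding Xb_def side_def by auto
  have "\<exists>S. S \<subseteq> I \<and> (\<forall>e\<in>Ev. \<not> A e S)"
  proof (rule lll[of I Ev Dp A p Dg])
    show "finite I" by (rule finI)
    show "finite Ev" unfolding Ev_def using finY by simp
    show "\<forall>e\<in>Ev. Dp e \<subseteq> I" unfolding Dp_def by auto
    show "\<forall>e\<in>Ev. \<forall>S. S \<subseteq> I \<longrightarrow> A e S = A e (S \<inter> Dp e)"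
    proof (intro ballI allI impI)
      fix e S assume eE: "e \<in> Ev" and SI: "S \<subseteq> I"
      obtain y j where e: "e = (y, j)" and y: "y \<in> Y" using eE unfolding Ev_def by auto
      have same: "(idx x \<in> S) = (idx x \<in> S \<inter> Dp e)" if "x \<in> nbhd E y" for x
        using that SI unfolding Dp_def e by auto
      have "nbhd E y \<inter> Xa S j = nbhd E y \<inter> Xa (S \<inter> Dp e) j" unfolding NXa[OF y] using same by auto
      moreover have "nbhd E y \<inter> Xb S j = nbhd E y \<inter> Xb (S \<inter> Dp e) j" unfolding NXb[OF y] using same by auto
      ultimately show "A e S = A e (S \<inter> Dp e)" unfolding A_def e by simp
    qed
    show "\<forall>e\<in>Ev. real (card {S. S \<subseteq> I \<and> A e S}) \<le> p * 2 ^ card I"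
    proof
      fix e assume eE: "e \<in> Ev"
      obtain y j where e: "e = (y, j)" and y: "y \<in> Y" using eE unfolding Ev_def by auto
      define N where "N = nbhd E y"
      have NX: "N \<subseteq> X" unfolding N_def by (rule NyX[OF y])
      have finN: "finite N" unfolding N_def using finNE y by simp
      have oppN: "\<forall>x\<in>N. \<forall>x'\<in>N. x \<noteq> x' \<and> idx x = idx x' \<longrightarrow> \<beta> j x \<noteq> \<beta> j x'"
        using opp NX by blast
      have oppN': "\<forall>x\<in>N. \<forall>x'\<in>N. x \<noteq> x' \<and> idx x = idx x' \<longrightarrow> (\<not> \<beta> j x) \<noteq> (\<not> \<beta> j x')"
        using opp NX by blast
      have cN: "card N = card {x\<in>N. idx x \<in> I} + card {x\<in>N. idx x \<notin> I}"
      proof -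
        have "N = {x\<in>N. idx x \<in> I} \<union> {x\<in>N. idx x \<notin> I}" by auto
        then have "card N = card ({x\<in>N. idx x \<in> I} \<union> {x\<in>N. idx x \<notin> I})" by simp
        also have "\<dots> = card {x\<in>N. idx x \<in> I} + card {x\<in>N. idx x \<notin> I}"
          by (rule card_Un_disjoint) (use finN in auto)
        finally show ?thesis .
      qed
      have out1: "card {x\<in>N. idx x \<notin> I} \<le> 1"
      proof (rule card_le1)
        show "finite {x\<in>N. idx x \<notin> I}" using finN by simp
        show "\<forall>x\<in>{x\<in>N. idx x \<notin> I}. \<forall>x'\<in>{x\<in>N. idx x \<notin> I}. x = x'"
        proof (intro ballI)
          fix x x' assume xx: "x \<in> {x\<in>N. idx x \<notin> I}" "x' \<in> {x\<in>N. idx x \<notin> I}"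
          have "x \<in> X" "x' \<in> X" using xx NX by auto
          then have "pos x < card X" "pos x' < card X" using posrange by auto
          moreover have "pos x div 2 \<ge> h" "pos x' div 2 \<ge> h" using xx unfolding I_def idx_def by auto
          ultimately have "pos x = 2 * h" "pos x' = 2 * h" using cX by linarith+
          then show "x = x'" using posinj' \<open>x \<in> X\<close> \<open>x' \<in> X\<close> by simp
        qed
      qed
      have "49 * real d / 100 \<le> real (card N)" unfolding N_def using degge y by simp
      moreover have "real (100 * u) \<le> real d" using du by linarith
      ultimately have "real (49 * u) \<le> real (card N)" by simp
      then have "49 * u \<le> card N" by linarith
      then have cI: "48 * u \<le> card {x\<in>N. idx x \<in> I}" using cN out1 u60 by linarith
      have m0: "d div 5 \<le> 20 * (u + 1)" using du by linarith
      define m where "m = d div 5"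
      have tail1: "real (card {S. S \<subseteq> I \<and> card {x\<in>N. (idx x \<in> S) \<noteq> \<beta> j x} \<le> m})
              \<le> 2 ^ card I * (3/2) ^ m * (5/6) ^ (48 * u)"
        by (rule tail[OF finI finN oppN cI])
      have tail2: "real (card {S. S \<subseteq> I \<and> card {x\<in>N. (idx x \<in> S) \<noteq> (\<not> \<beta> j x)} \<le> m})
              \<le> 2 ^ card I * (3/2) ^ m * (5/6) ^ (48 * u)"
        by (rule tail[OF finI finN oppN' cI])
      have pm: "(3/2::real) ^ m \<le> (3/2) ^ (20 * (u + 1))" unfolding m_def
        by (rule power_increasing[OF m0]) simp
      have sm: "c \<le> m" if "real c < real d / 5" for c
      proof -
        have "c * 5 < d" using that by linarith
        then have "(c * 5) div 5 \<le> d div 5" by (intro div_le_mono) simp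
        then show ?thesis unfolding m_def by simp
      qed
      have sub: "{S. S \<subseteq> I \<and> A e S} \<subseteq>
          {S. S \<subseteq> I \<and> card {x\<in>N. (idx x \<in> S) \<noteq> \<beta> j x} \<le> m} \<union>
          {S. S \<subseteq> I \<and> card {x\<in>N. (idx x \<in> S) \<noteq> (\<not> \<beta> j x)} \<le> m}"
      proof
        fix S assume "S \<in> {S. S \<subseteq> I \<and> A e S}"
        then have SI': "S \<subseteq> I" and AS: "A e S" by auto
        have ea: "nbhd E y \<inter> Xa S j = {x\<in>N. (idx x \<in> S) \<noteq> \<beta> j x}" using NXa[OF y] unfolding N_def .
        have eb: "nbhd E y \<inter> Xb S j = {x\<in>N. (idx x \<in> S) \<noteq> (\<not> \<beta> j x)}" using NXb[OF y] unfolding N_def .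
        have "real (card {x\<in>N. (idx x \<in> S) \<noteq> \<beta> j x}) < real d / 5 \<or>
              real (card {x\<in>N. (idx x \<in> S) \<noteq> (\<not> \<beta> j x)}) < real d / 5"
          using AS unfolding A_def e fst_conv snd_conv ea eb .
        then show "S \<in> {S. S \<subseteq> I \<and> card {x\<in>N. (idx x \<in> S) \<noteq> \<beta> j x} \<le> m} \<union>
          {S. S \<subseteq> I \<and> card {x\<in>N. (idx x \<in> S) \<noteq> (\<not> \<beta> j x)} \<le> m}"
          using sm SI' by blast
      qed
      have "card {S. S \<subseteq> I \<and> A e S} \<le> card ({S. S \<subseteq> I \<and> card {x\<in>N. (idx x \<in> S) \<noteq> \<beta> j x} \<le> m} \<union>
          {S. S \<subseteq> I \<and> card {x\<in>N. (idx x \<in> S) \<noteq> (\<not> \<beta> j x)} \<le> m})"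
        by (rule card_mono[OF _ sub]) (use finI in simp)
      also have "\<dots> \<le> card {S. S \<subseteq> I \<and> card {x\<in>N. (idx x \<in> S) \<noteq> \<beta> j x} \<le> m} +
          card {S. S \<subseteq> I \<and> card {x\<in>N. (idx x \<in> S) \<noteq> (\<not> \<beta> j x)} \<le> m}"
        by (rule card_Un_le)
      finally have "real (card {S. S \<subseteq> I \<and> A e S}) \<le> 
          real (card {S. S \<subseteq> I \<and> card {x\<in>N. (idx x \<in> S) \<noteq> \<beta> j x} \<le> m}) +
          real (card {S. S \<subseteq> I \<and> card {x\<in>N. (idx x \<in> S) \<noteq> (\<not> \<beta> j x)} \<le> m})"
        by linarith
      also have "\<dots> \<le> 2 * (2 ^ card I * (3/2) ^ m * (5/6) ^ (48 * u))" using tail1 tail2 by linarith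
      also have "\<dots> \<le> 2 * (2 ^ card I * (3/2) ^ (20 * (u + 1)) * (5/6) ^ (48 * u))"
        using pm by (intro mult_left_mono mult_right_mono) simp_all
      also have "\<dots> = p * 2 ^ card I" unfolding p_def by (simp only: mult_ac)
      finally show "real (card {S. S \<subseteq> I \<and> A e S}) \<le> p * 2 ^ card I" .
    qed
    show "\<forall>e\<in>Ev. card {f \<in> Ev. Dp f \<inter> Dp e \<noteq> {}} \<le> Dg"
    proof
      fix e assume eE: "e \<in> Ev"
      obtain y j where e: "e = (y, j)" and y: "y \<in> Y" using eE unfolding Ev_def by auto
      define N where "N = nbhd E y"
      have NX: "N \<subseteq> X" unfolding N_def by (rule NyX[OF y])
      have finN: "finite N" unfolding N_def using finNE y by simp
      define Z where "Z = (\<Union>x\<in>N. \<Union>x'\<in>{x'\<in>X. idx x' = idx x}. nbhd E x')"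
      have sub: "{f \<in> Ev. Dp f \<inter> Dp e \<noteq> {}} \<subseteq> Z \<times> {1..kk}"
      proof
        fix f assume fm: "f \<in> {f \<in> Ev. Dp f \<inter> Dp e \<noteq> {}}"
        then have ne: "Dp f \<inter> Dp e \<noteq> {}" and fE: "f \<in> Ev" by auto
        obtain y' j' where f: "f = (y', j')" using prod.exhaust by blast
        have y': "y' \<in> Y" and j': "j' \<in> {1..kk}" using fE unfolding f Ev_def by auto
        from ne obtain x' x where x': "x' \<in> nbhd E y'" and x: "x \<in> N" and ii: "idx x' = idx x"
          unfolding Dp_def e f N_def by auto
        have "x' \<in> X" using x' NyX[OF y'] by auto
        moreover have "y' \<in> nbhd E x'" using x' Esym unfolding nbhd_def by auto
        ultimately have "y' \<in> Z" unfolding Z_def using x ii by blast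
        then show "f \<in> Z \<times> {1..kk}" using f j' by simp
      qed
      have cZ: "card Z \<le> 2 * d * d"
      proof -
        have "card Z \<le> (\<Sum>x\<in>N. card (\<Union>x'\<in>{x'\<in>X. idx x' = idx x}. nbhd E x'))"
          unfolding Z_def by (rule card_UN_le[OF finN])
        also have "\<dots> \<le> (\<Sum>x\<in>N. 2 * d)"
        proof (rule sum_mono)
          fix x assume "x \<in> N"
          have "card (\<Union>x'\<in>{x'\<in>X. idx x' = idx x}. nbhd E x') \<le> (\<Sum>x'\<in>{x'\<in>X. idx x' = idx x}. card (nbhd E x'))"
            by (rule card_UN_le[OF finP])
          also have "\<dots> \<le> (\<Sum>x'\<in>{x'\<in>X. idx x' = idx x}. d)" by (rule sum_mono) (use degle in simp)
          also have "\<dots> = card {x'\<in>X. idx x' = idx x} * d" by simp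
          also have "\<dots> \<le> 2 * d" using P2[of "idx x"] by (simp add: mult_right_mono)
          finally show "card (\<Union>x'\<in>{x'\<in>X. idx x' = idx x}. nbhd E x') \<le> 2 * d" .
        qed
        also have "\<dots> = card N * (2 * d)" by simp
        also have "\<dots> \<le> d * (2 * d)" using degle y unfolding N_def by (simp add: mult_right_mono)
        finally show ?thesis by (simp add: mult_ac)
      qed
      have finZ: "finite Z" unfolding Z_def using finN finP finNE by simp
      have "card {f \<in> Ev. Dp f \<inter> Dp e \<noteq> {}} \<le> card (Z \<times> {1..kk})"
        by (rule card_mono[OF _ sub]) (use finZ in simp)
      also have "\<dots> = card Z * kk" by (simp add: card_cartesian_product)
      also have "\<dots> \<le> (2 * d * d) * (2 * d)" using cZ kk2d by (rule mult_mono) simp_all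
      also have "\<dots> = Dg" unfolding Dg_def by (simp add: power3_eq_cube)
      finally show "card {f \<in> Ev. Dp f \<inter> Dp e \<noteq> {}} \<le> Dg" .
    qed
    show "4 * p * real Dg \<le> 1"
    proof -
      define \<rho> :: real where "\<rho> = (3/2)^20 * (5/6)^48"
      have rho: "\<rho> \<le> 53/100" unfolding \<rho>_def by (simp add: power_divide)
      have rho0: "0 \<le> \<rho>" unfolding \<rho>_def by simp
      have pe: "p = 2 * (3/2)^20 * \<rho> ^ u"
      proof -
        have e20: "20 * (u + 1) = 20 + 20 * u" by simp
        have "(3/2::real) ^ (20 * (u + 1)) = (3/2)^20 * (3/2)^(20 * u)"
          by (simp only: e20 power_add)
        also have "(3/2::real)^(20 * u) = ((3/2)^20)^u" by (rule power_mult)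
        finally have "(3/2::real) ^ (20 * (u + 1)) = (3/2)^20 * ((3/2)^20)^u" .
        moreover have "(5/6::real) ^ (48 * u) = ((5/6)^48)^u" by (rule power_mult)
        ultimately show ?thesis unfolding p_def \<rho>_def by (simp add: power_mult_distrib mult_ac)
      qed
      have dd: "real Dg \<le> 4 * 1000000 * (real u + 1) ^ 3"
      proof -
        have "d \<le> 100 * (u + 1)" using du by simp
        then have "real d \<le> real (100 * (u + 1))" by (rule of_nat_mono)
        then have "real d \<le> 100 * (real u + 1)" by simp
        then have "real d ^ 3 \<le> (100 * (real u + 1)) ^ 3" by (rule power_mono) simp
        moreover have "(100 * (real u + 1)) ^ 3 = 1000000 * (real u + 1) ^ 3"
          by (simp only: power_mult_distrib) simp
        moreover have "real Dg = 4 * real d ^ 3" unfolding Dg_def by simp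
        ultimately show ?thesis by linarith
      qed
      have "4 * p * real Dg \<le> 4 * p * (4 * 1000000 * (real u + 1) ^ 3)"
        using dd unfolding pe using rho0 by (intro mult_left_mono) simp_all
      also have "\<dots> = 32000000 * (3/2)^20 * (real u + 1)^3 * \<rho> ^ u" unfolding pe by (simp add: mult_ac)
      also have "\<dots> \<le> 32000000 * (3/2)^20 * (real u + 1)^3 * (53/100) ^ u"
        using power_mono[OF rho rho0, of u] by (intro mult_left_mono) simp_all
      also have "\<dots> \<le> 1" by (rule num_bound[OF u60])
      finally show ?thesis .
    qed
    then show "0 \<le> p" unfolding p_def by simp
    show "p < 1/2"
    proof -
      have "Dg \<ge> 1" unfolding Dg_def using dbig by simp
      then have "4 * p * 1 \<le> 4 * p * real Dg" unfolding p_def by (intro mult_left_mono) simp_all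
      with \<open>4 * p * real Dg \<le> 1\<close> show ?thesis by linarith
    qed
  qed
  then obtain S where SI: "S \<subseteq> I" and Sgood: "\<forall>e\<in>Ev. \<not> A e S" by blast
  have side_pair: "side j S x \<noteq> side j S x'" if "x \<in> X" "x' \<in> X" "x \<noteq> x'" "idx x = idx x'" for j x x'
    using opp[OF that, of j] that(4) unfolding side_def by auto
  have half: "h \<le> card {x\<in>X. side j S x = b}" for j b
  proof -
    define g where "g i = (if side j S (inv (2 * i)) = b then inv (2 * i) else inv (2 * i + 1))" for i
    have gi: "g i \<in> {x\<in>X. side j S x = b} \<and> idx (g i) = i" if "i \<in> I" for i
    proof -
      have lt: "2 * i < card X" "2 * i + 1 < card X" using that unfolding I_def h_def by auto
      have a0: "inv (2 * i) \<in> X" "pos (inv (2 * i)) = 2 * i" using inv[OF lt(1)] by auto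
      have a1: "inv (2 * i + 1) \<in> X" "pos (inv (2 * i + 1)) = 2 * i + 1" using inv[OF lt(2)] by auto
      have i0: "idx (inv (2 * i)) = i" "idx (inv (2 * i + 1)) = i" unfolding idx_def using a0 a1 by simp_all
      have ne: "inv (2 * i) \<noteq> inv (2 * i + 1)" using a0 a1 by auto
      have "side j S (inv (2 * i)) \<noteq> side j S (inv (2 * i + 1))"
        by (rule side_pair[OF a0(1) a1(1) ne]) (simp only: i0)
      then show ?thesis unfolding g_def using a0 a1 i0 by auto
    qed
    have "inj_on g I" by (rule inj_onI) (metis gi)
    moreover have "g ` I \<subseteq> {x\<in>X. side j S x = b}" using gi by auto
    ultimately have "card I \<le> card {x\<in>X. side j S x = b}"
      by (intro card_inj_on_le) (simp_all add: finX)
    then show ?thesis using cardI by simp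
  qed
  have bal: "\<bar>int (card (Xa S j)) - int (card (Xb S j))\<bar> \<le> 1" for j
  proof -
    have "X = Xa S j \<union> Xb S j" unfolding Xa_def Xb_def by auto
    moreover have "Xa S j \<inter> Xb S j = {}" unfolding Xa_def Xb_def by auto
    ultimately have cs: "card X = card (Xa S j) + card (Xb S j)"
      using finX by (metis card_Un_disjoint finite_Un)
    have "h \<le> card (Xa S j)" using half[of j True] unfolding Xa_def by simp
    moreover have "h \<le> card (Xb S j)" using half[of j False] unfolding Xb_def by simp
    ultimately show ?thesis using cs cX by linarith
  qed
  have sep: "\<exists>j\<in>{1..kk}. side j S x \<noteq> side j S x'" if "G x x'" for x x'
  proof -
    have xX: "x \<in> X" "x' \<in> X" using GX that by auto
    have ne: "x \<noteq> x'" using Girr that by auto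
    show ?thesis
    proof (cases "idx x = idx x'")
      case True
      then show ?thesis using side_pair[OF xX ne True, of 1] kk1 by auto
    next
      case False
      have R: "R (idx x) (idx x')" unfolding R_def using xX that by blast
      have cne: "col (idx x) \<noteq> col (idx x')"
        using colP R False idxh xX by auto
      show ?thesis
      proof (rule ccontr)
        assume "\<not> ?thesis"
        then have eqs: "\<forall>j\<in>{1..kk}. side j S x = side j S x'" by auto
        define fl where "fl z = ((idx z \<in> S) \<noteq> odd (pos z))" for z
        have sd: "side j S z = (fl z \<noteq> bit (col (idx z)) (j - 1))" for j z
          unfolding side_def \<beta>_def fl_def by auto
        have hb: "\<not> bit (col (idx z)) (kk - 1)" if "z \<in> X" for z
          by (rule bit_high[OF colB[OF that]]) simp
        have "side kk S x = side kk S x'" using eqs kk1 by auto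
        then have ff: "fl x = fl x'" unfolding sd using hb xX by simp
        have "\<forall>m<kk - 1. bit (col (idx x)) m = bit (col (idx x')) m"
        proof (intro allI impI)
          fix m assume "m < kk - 1"
          then have "m + 1 \<in> {1..kk}" by simp
          then have "side (m + 1) S x = side (m + 1) S x'" using eqs by blast
          then show "bit (col (idx x)) m = bit (col (idx x')) m" unfolding sd add_diff_cancel_right' using ff by blast
        qed
        then have "col (idx x) = col (idx x')" using bits_eq colB xX by blast
        with cne show False ..
      qed
    qed
  qed
  show ?thesis
  proof (intro exI conjI)
    show "\<forall>j\<in>{1..kk}. bipartition_of X (Xa S j) (Xb S j)"
      unfolding bipartition_of_def Xa_def Xb_def by auto
    show "\<forall>u v. G u v \<longrightarrow> (\<exists>j\<in>{1..kk}. (u \<in> Xa S j \<and> v \<in> Xb S j) \<or> (v \<in> Xa S j \<and> u \<in> Xb S j))"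
    proof (intro allI impI)
      fix x x' assume G: "G x x'"
      have xX: "x \<in> X" "x' \<in> X" using GX G by auto
      obtain j where "j \<in> {1..kk}" "side j S x \<noteq> side j S x'" using sep[OF G] by blast
      then show "\<exists>j\<in>{1..kk}. (x \<in> Xa S j \<and> x' \<in> Xb S j) \<or> (x' \<in> Xa S j \<and> x \<in> Xb S j)"
        unfolding Xa_def Xb_def using xX by auto
    qed
    show "\<forall>j\<in>{1..kk}. d_good (real d / 5) Y E (Xa S j) (Xb S j)"
    proof
      fix j assume j: "j \<in> {1..kk}"
      have "\<forall>y\<in>Y. real (card (nbhd E y \<inter> Xa S j)) \<ge> real d / 5 \<and> real (card (nbhd E y \<inter> Xb S j)) \<ge> real d / 5"
      proof
        fix y assume y: "y \<in> Y"
        have "(y, j) \<in> Ev" unfolding Ev_def using y j by simp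
        then have "\<not> A (y, j) S" using Sgood by blast
        then show "real (card (nbhd E y \<inter> Xa S j)) \<ge> real d / 5 \<and> real (card (nbhd E y \<inter> Xb S j)) \<ge> real d / 5"
          unfolding A_def by auto
      qed
      then show "d_good (real d / 5) Y E (Xa S j) (Xb S j)" unfolding d_good_def using bal by blast
    qed
  qed
qed

theorem lemma3p4:
  shows "\<exists>d0::nat. d0 > 0 \<and> (\<forall>d::nat. d \<ge> d0 \<longrightarrow>
    (\<forall>(n::nat) X Y (E :: nat \<Rightarrow> nat \<Rightarrow> bool) (G :: nat \<Rightarrow> nat \<Rightarrow> bool) (\<Delta>::nat).
       n > 0 \<longrightarrow> even n \<longrightarrow> balanced_bipartite n X Y E \<longrightarrow>
       (\<forall>v\<in>{1..n}. real d / 2 - real d powr (2/3) \<le> real (card (nbhd E v)) \<and>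
                    real (card (nbhd E v)) \<le> real d / 2 + real d powr (2/3)) \<longrightarrow>
       simple_graph_on X G \<longrightarrow> (\<forall>v\<in>X. card (nbhd G v) \<le> \<Delta>) \<longrightarrow>
       1 \<le> \<Delta> \<longrightarrow> \<Delta> \<le> d \<longrightarrow>
       (let k = nat \<lceil>log 2 (real \<Delta>)\<rceil> + 8 in
        \<exists>X1 X2 :: nat \<Rightarrow> nat set.
          (\<forall>j\<in>{1..k}. bipartition_of X (X1 j) (X2 j)) \<and>
          (\<forall>u v. G u v \<longrightarrow> (\<exists>j\<in>{1..k}. (u \<in> X1 j \<and> v \<in> X2 j) \<or> (v \<in> X1 j \<and> u \<in> X2 j))) \<and>
          (\<forall>j\<in>{1..k}. d_good (real d / 5) Y E (X1 j) (X2 j)))))"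
  apply (rule exI[of _ "1000000::nat"])
  apply (intro conjI allI impI)
   apply simp
  apply (unfold Let_def)
  apply (rule main_lemma)
          apply assumption+
  apply (rule refl)
  done

end
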